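(* Let $k\ge 2$ be an integer and let $G$ be a finite simple connected graph of order $n\ge k$. Then $$W_{tsp,k}(G)\le k\binom{n}{k}\mu(G)=\frac{2}{k-1}\binom{n-2}{k-2}W(G).$$ Equality holds if and only if $k\in\{2,3\}$, or $k>3$ and $G$ is the star $S_n$ or the complete graph $K_n$.
   Context: $d(u,v)$ is the graph distance; $W(G)=\sum_{\{u,v\}\subseteq V}d(u,v)$ is the Wiener index and $\mu(G)=W(G)/\binom{n}{2}$ the average distance. For a set $S$ of $k$ vertices, $\mathrm{tsp}_k(S)$ is the length (number of edge traversals, with multiplicity) of a shortest closed walk in $G$ visiting all vertices of $S$, and $W_{tsp,k}(G)=\sum_{S\subseteq V,\,|S|=k}\mathrm{tsp}_k(S)$. $S_n$ denotes the star $K_{1,n-1}$. *)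

theory Defs
  imports Complex_Main
begin

definition simple_graph :: "'a set \<Rightarrow> ('a \<Rightarrow> 'a \<Rightarrow> bool) \<Rightarrow> bool" where
  "simple_graph V E \<longleftrightarrow> finite V \<and>
     (\<forall>u v. E u v \<longrightarrow> u \<in> V \<and> v \<in> V \<and> u \<noteq> v \<and> E v u)"

text \<open>A walk is a nonempty list of vertices, consecutive ones adjacent;
  its length is the number of edge traversals, i.e. length xs - 1.\<close>
definition is_walk :: "'a set \<Rightarrow> ('a \<Rightarrow> 'a \<Rightarrow> bool) \<Rightarrow> 'a list \<Rightarrow> bool" where
  "is_walk V E xs \<longleftrightarrow> xs \<noteq> [] \<and> set xs \<subseteq> V \<and>
     (\<forall>i. Suc i < length xs \<longrightarrow> E (xs ! i) (xs ! Suc i))"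

definition connected_graph :: "'a set \<Rightarrow> ('a \<Rightarrow> 'a \<Rightarrow> bool) \<Rightarrow> bool" where
  "connected_graph V E \<longleftrightarrow>
     (\<forall>u\<in>V. \<forall>v\<in>V. \<exists>xs. is_walk V E xs \<and> hd xs = u \<and> last xs = v)"

definition gdist :: "'a set \<Rightarrow> ('a \<Rightarrow> 'a \<Rightarrow> bool) \<Rightarrow> 'a \<Rightarrow> 'a \<Rightarrow> nat" where
  "gdist V E u v = (LEAST m. \<exists>xs. is_walk V E xs \<and> hd xs = u \<and> last xs = v
                                  \<and> length xs = Suc m)"

text \<open>Wiener index: sum of distances over unordered pairs of distinct vertices
  (each unordered pair counted once; written as half the ordered double sum).\<close>
definition wiener :: "'a set \<Rightarrow> ('a \<Rightarrow> 'a \<Rightarrow> bool) \<Rightarrow> real" where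
  "wiener V E = (\<Sum>u\<in>V. \<Sum>v\<in>V. real (gdist V E u v)) / 2"

definition avg_dist :: "'a set \<Rightarrow> ('a \<Rightarrow> 'a \<Rightarrow> bool) \<Rightarrow> real" where
  "avg_dist V E = wiener V E / real (card V choose 2)"

definition tsp :: "'a set \<Rightarrow> ('a \<Rightarrow> 'a \<Rightarrow> bool) \<Rightarrow> 'a set \<Rightarrow> nat" where
  "tsp V E S = (LEAST m. \<exists>xs. is_walk V E xs \<and> hd xs = last xs \<and> S \<subseteq> set xs
                             \<and> length xs = Suc m)"

definition wiener_tsp :: "'a set \<Rightarrow> ('a \<Rightarrow> 'a \<Rightarrow> bool) \<Rightarrow> nat \<Rightarrow> nat" where
  "wiener_tsp V E k = (\<Sum>S\<in>{S. S \<subseteq> V \<and> card S = k}. tsp V E S)"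

definition is_star :: "'a set \<Rightarrow> ('a \<Rightarrow> 'a \<Rightarrow> bool) \<Rightarrow> bool" where
  "is_star V E \<longleftrightarrow> (\<exists>c\<in>V. \<forall>u\<in>V. \<forall>v\<in>V. E u v \<longleftrightarrow> (u \<noteq> v \<and> (u = c \<or> v = c)))"

definition is_complete :: "'a set \<Rightarrow> ('a \<Rightarrow> 'a \<Rightarrow> bool) \<Rightarrow> bool" where
  "is_complete V E \<longleftrightarrow> (\<forall>u\<in>V. \<forall>v\<in>V. E u v \<longleftrightarrow> u \<noteq> v)"

end

theory Submission imports Defs
begin

fun pcost :: "('a \<Rightarrow> 'a \<Rightarrow> nat) \<Rightarrow> 'a list \<Rightarrow> nat" where
  "pcost d (a # b # r) = d a b + pcost d (b # r)"
| "pcost d _ = 0"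

definition ccost :: "('a \<Rightarrow> 'a \<Rightarrow> nat) \<Rightarrow> 'a list \<Rightarrow> nat" where
  "ccost d xs = pcost d xs + d (last xs) (hd xs)"

definition TT :: "('a \<Rightarrow> 'a \<Rightarrow> nat) \<Rightarrow> 'a set \<Rightarrow> nat" where
  "TT d S = (\<Sum>a\<in>S. \<Sum>b\<in>S. d a b)"

lemma arith4: "2 * (X + Y + Z + P + Q + R) \<le> 3 * (X + P + R + Z) \<Longrightarrow>
 2 * (X + Y + Z + P + Q + R) \<le> 3 * (Y + P + Q + Z) \<Longrightarrow>
 2 * (X + Y + Z + P + Q + R) \<le> 3 * (X + Q + R + Y) \<Longrightarrow> X + R = Y + (Q::nat)"
  by presburger

lemma pcost_snoc: "r \<noteq> [] \<Longrightarrow> pcost d (r @ [a]) = pcost d r + d (last r) a"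
  by (induction r rule: list_nonempty_induct) (auto simp: neq_Nil_conv)

lemma ccost_rotate1: "ccost d (rotate1 xs) = ccost d xs"
proof (cases xs)
  case (Cons a r)
  show ?thesis
  proof (cases r)
    case (Cons b r')
    then show ?thesis using \<open>xs = a # r\<close> pcost_snoc[where r=r and a=a and d=d] by (simp add: ccost_def)
  qed (simp add: Cons)
qed simp

lemma ccost_rotate: "ccost d (rotate n xs) = ccost d xs"
  by (induction n) (simp_all add: ccost_rotate1)

lemma ccost_snoc: "w \<noteq> [] \<Longrightarrow>
  ccost d (w @ [x]) + d (last w) (hd w) = ccost d w + d (last w) x + d x (hd w)"
  by (simp add: ccost_def pcost_snoc)

lemma pcost_nth: "pcost d xs = (\<Sum>i<length xs - 1. d (xs ! i) (xs ! Suc i))"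
proof (induction xs rule: induct_list012)
  case (3 x y zs)
  show ?case using 3(2) by (simp add: sum.lessThan_Suc_shift del: sum.lessThan_Suc)
qed simp_all

lemma ccost_nth: assumes "xs \<noteq> []"
  shows "ccost d xs = (\<Sum>i<length xs. d (xs ! i) (xs ! (Suc i mod length xs)))"
proof -
  obtain m where m: "length xs = Suc m" using assms by (cases xs) auto
  have "(\<Sum>i<length xs. d (xs ! i) (xs ! (Suc i mod length xs)))
      = (\<Sum>i<m. d (xs ! i) (xs ! (Suc i mod Suc m))) + d (xs ! m) (xs ! 0)" using m by simp
  also have "(\<Sum>i<m. d (xs ! i) (xs ! (Suc i mod Suc m))) = (\<Sum>i<m. d (xs ! i) (xs ! Suc i))"
    by (rule sum.cong) auto
  finally show ?thesis using m assms
    by (simp add: ccost_def pcost_nth last_conv_nth hd_conv_nth)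
qed

lemma sum_shift_mod: assumes "m > 0"
  shows "(\<Sum>j<m. f (Suc j mod m)) = (\<Sum>j<m. (f j :: nat))"
proof -
  define g where "g j = f (j mod m)" for j
  have "(\<Sum>j<Suc m. g j) = g 0 + (\<Sum>j<m. g (Suc j))" by (rule sum.lessThan_Suc_shift)
  moreover have "(\<Sum>j<Suc m. g j) = (\<Sum>j<m. g j) + g m" by simp
  moreover have "g m = g 0" by (simp add: g_def)
  ultimately have "(\<Sum>j<m. g (Suc j)) = (\<Sum>j<m. g j)" by simp
  moreover have "(\<Sum>j<m. g j) = (\<Sum>j<m. f j)" by (rule sum.cong) (auto simp: g_def)
  ultimately show ?thesis by (simp add: g_def)
qed

lemma sum_nth_distinct: "distinct ys \<Longrightarrow> (\<Sum>j<length ys. f (ys ! j)) = (\<Sum>y\<in>set ys. f y)"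
  using sum.reindex_bij_betw[OF bij_betw_nth[of ys "{..<length ys}" "set ys"], of f] by simp

lemma exists_le_avg: assumes "m > 0" shows "\<exists>j<m. m * f j \<le> (\<Sum>j<m. (f j :: nat))"
proof (rule ccontr)
  assume "\<not> ?thesis"
  then have "\<forall>j<m. (\<Sum>j<m. f j) < m * f j" by auto
  then have "(\<Sum>j<m. (\<Sum>j<m. f j)) < (\<Sum>j<m. m * f j)"
    using assms by (intro sum_strict_mono) auto
  then show False by (simp add: sum_distrib_left)
qed

lemma insertion:
  assumes "distinct ys" "length ys = m" "m > 0" "x \<notin> set ys"
    and sym: "\<And>y. y \<in> set ys \<Longrightarrow> d x y = d y x"
  shows "\<exists>zs. distinct zs \<and> set zs = insert x (set ys) \<and> length zs = Suc m \<and>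
     m * ccost d zs + ccost d ys \<le> m * ccost d ys + 2 * (\<Sum>y\<in>set ys. d y x)"
proof -
  have ne: "ys \<noteq> []" using assms by auto
  define zs where "zs j = rotate (Suc j) ys @ [x]" for j
  have key: "ccost d (zs j) + d (ys ! j) (ys ! (Suc j mod m)) =
      ccost d ys + d (ys ! j) x + d x (ys ! (Suc j mod m))" if "j < m" for j
  proof -
    have rne: "rotate j ys \<noteq> []" using ne by simp
    have "last (rotate (Suc j) ys) = ys ! j"
      using rne hd_rotate_conv_nth[OF ne, of j] that assms(2) by (simp add: rotate1_hd_tl)
    moreover have "hd (rotate (Suc j) ys) = ys ! (Suc j mod m)"
      using hd_rotate_conv_nth[OF ne, of "Suc j"] assms(2) by simp
    moreover have "rotate (Suc j) ys \<noteq> []" using ne by simp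
    ultimately show ?thesis
      using ccost_snoc[of "rotate (Suc j) ys" d x] ccost_rotate[of d "Suc j" ys] unfolding zs_def
      by simp
  qed
  have "(\<Sum>j<m. ccost d (zs j) + d (ys ! j) (ys ! (Suc j mod m))) =
      (\<Sum>j<m. ccost d ys + d (ys ! j) x + d x (ys ! (Suc j mod m)))"
    using key by (intro sum.cong) auto
  then have "(\<Sum>j<m. ccost d (zs j)) + ccost d ys =
      m * ccost d ys + (\<Sum>j<m. d (ys ! j) x) + (\<Sum>j<m. d x (ys ! (Suc j mod m)))"
    using ccost_nth[OF ne, of d] assms(2) by (simp add: sum.distrib)
  moreover have "(\<Sum>j<m. d x (ys ! (Suc j mod m))) = (\<Sum>j<m. d x (ys ! j))"
    using sum_shift_mod[OF assms(3), of "\<lambda>j. d x (ys ! j)"] by simp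
  moreover have "(\<Sum>j<m. d x (ys ! j)) = (\<Sum>y\<in>set ys. d x y)"
    using sum_nth_distinct[OF assms(1), of "d x"] assms(2) by simp
  moreover have "(\<Sum>j<m. d (ys ! j) x) = (\<Sum>y\<in>set ys. d y x)"
    using sum_nth_distinct[OF assms(1), of "\<lambda>y. d y x"] assms(2) by simp
  moreover have "(\<Sum>y\<in>set ys. d x y) = (\<Sum>y\<in>set ys. d y x)"
    by (rule sum.cong[OF refl], rule sym)
  ultimately have tot: "(\<Sum>j<m. ccost d (zs j)) + ccost d ys = m * ccost d ys + 2 * (\<Sum>y\<in>set ys. d y x)"
    by simp
  obtain j where j: "j < m" "m * ccost d (zs j) \<le> (\<Sum>j<m. ccost d (zs j))"
    using exists_le_avg[OF assms(3), of "\<lambda>j. ccost d (zs j)"] by auto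
  have "distinct (zs j)" "set (zs j) = insert x (set ys)" "length (zs j) = Suc m"
    using assms unfolding zs_def by auto
  then show ?thesis using j tot by (intro exI[of _ "zs j"]) auto
qed

locale G =
  fixes V :: "'a set" and E :: "'a \<Rightarrow> 'a \<Rightarrow> bool"
  assumes sg: "simple_graph V E" and cg: "connected_graph V E"
begin

abbreviation d where "d \<equiv> gdist V E"

lemma finV: "finite V" using sg by (simp add: simple_graph_def)
lemma Esym: "E u v \<Longrightarrow> E v u" using sg by (simp add: simple_graph_def)
lemma EV: "E u v \<Longrightarrow> u \<in> V \<and> v \<in> V \<and> u \<noteq> v" using sg by (simp add: simple_graph_def)

lemma walk_single[simp]: "is_walk V E [u] \<longleftrightarrow> u \<in> V"
  by (simp add: is_walk_def)

lemma d_le: "is_walk V E xs \<Longrightarrow> hd xs = u \<Longrightarrow> last xs = v \<Longrightarrow> d u v \<le> length xs - 1"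
  unfolding gdist_def
proof (rule Least_le)
  assume "is_walk V E xs" "hd xs = u" "last xs = v"
  then show "\<exists>xsa. is_walk V E xsa \<and> hd xsa = u \<and> last xsa = v \<and> length xsa = Suc (length xs - 1)"
    by (intro exI[of _ xs]) (auto simp: is_walk_def)
qed

lemma d_ex: assumes "u \<in> V" "v \<in> V"
  shows "\<exists>xs. is_walk V E xs \<and> hd xs = u \<and> last xs = v \<and> length xs = Suc (d u v)"
proof -
  obtain xs where "is_walk V E xs" "hd xs = u" "last xs = v"
    using cg assms unfolding connected_graph_def by blast
  then have "\<exists>m xs. is_walk V E xs \<and> hd xs = u \<and> last xs = v \<and> length xs = Suc m"
    by (intro exI[of _ "length xs - 1"] exI[of _ xs]) (auto simp: is_walk_def)
  then show ?thesis unfolding gdist_def by (rule LeastI_ex)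
qed

lemma walk_app:
  assumes "is_walk V E xs" "is_walk V E ys" "last xs = hd ys"
  shows "is_walk V E (xs @ tl ys) \<and> hd (xs @ tl ys) = hd xs \<and> last (xs @ tl ys) = last ys
     \<and> length (xs @ tl ys) = length xs + length ys - 1"
proof -
  have ne: "xs \<noteq> []" "ys \<noteq> []" using assms by (auto simp: is_walk_def)
  have "ys = hd ys # tl ys" using ne by simp
  have set: "set (xs @ tl ys) \<subseteq> V" using assms ne by (auto simp: is_walk_def dest: list.set_sel(2))
  have st: "E ((xs @ tl ys) ! i) ((xs @ tl ys) ! Suc i)" if "Suc i < length (xs @ tl ys)" for i
  proof (cases "Suc i < length xs")
    case True then show ?thesis using assms(1) by (simp add: is_walk_def nth_append)
  next
    case False
    then have "i \<ge> length xs - 1" by simp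
    define j where "j = i - (length xs - 1)"
    have i: "i = length xs - 1 + j" using False j_def ne by simp
    have "Suc j < length ys" using that ne i by auto
    then have e: "E (ys ! j) (ys ! Suc j)" using assms(2) by (simp add: is_walk_def)
    have "(xs @ tl ys) ! i = ys ! j"
    proof (cases j)
      case 0 then show ?thesis using i ne assms(3)
        by (simp add: nth_append last_conv_nth hd_conv_nth)
    next
      case (Suc j')
      have L: "length xs > 0" using ne by simp
      have "i - length xs = j'" using L i Suc by arith
      moreover have "\<not> i < length xs" using L i Suc by arith
      moreover have "tl ys ! j' = ys ! Suc j'" using ne by (cases ys) auto
      ultimately show ?thesis using Suc by (simp add: nth_append)
    qed
    moreover have "(xs @ tl ys) ! Suc i = ys ! Suc j"
    proof -
      have L: "length xs > 0" using ne by simp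
      have "Suc i - length xs = j" using L i by arith
      moreover have "\<not> Suc i < length xs" using L i by arith
      moreover have "tl ys ! j = ys ! Suc j" using ne by (cases ys) auto
      ultimately show ?thesis by (simp add: nth_append)
    qed
    ultimately show ?thesis using e by simp
  qed
  have "last (xs @ tl ys) = last ys"
    using ne assms(3) by (cases "tl ys = []") (auto simp: last_tl, metis list.collapse last_ConsL)
  moreover have "length (xs @ tl ys) = length xs + length ys - 1" using ne by (cases ys) auto
  ultimately show ?thesis using set st ne by (auto simp: is_walk_def)
qed

lemma d_tri: assumes "u \<in> V" "v \<in> V" "w \<in> V" shows "d u w \<le> d u v + d v w"
proof -
  obtain xs where xs: "is_walk V E xs" "hd xs = u" "last xs = v" "length xs = Suc (d u v)"
    using d_ex assms by blast
  obtain ys where ys: "is_walk V E ys" "hd ys = v" "last ys = w" "length ys = Suc (d v w)"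
    using d_ex assms by blast
  have "is_walk V E (xs @ tl ys) \<and> hd (xs @ tl ys) = u \<and> last (xs @ tl ys) = w
     \<and> length (xs @ tl ys) = Suc (d u v) + Suc (d v w) - 1"
    using walk_app[of xs ys] xs ys by simp
  then show ?thesis using d_le by fastforce
qed

lemma walk_rev: "is_walk V E xs \<Longrightarrow> is_walk V E (rev xs)"
  unfolding is_walk_def
proof (intro conjI allI impI)
  fix i assume a: "xs \<noteq> [] \<and> set xs \<subseteq> V \<and> (\<forall>i. Suc i < length xs \<longrightarrow> E (xs ! i) (xs ! Suc i))"
    and i: "Suc i < length (rev xs)"
  define j where "j = length xs - Suc (Suc i)"
  have "Suc j < length xs" using i j_def by simp
  then have "E (xs ! j) (xs ! Suc j)" using a by blast
  moreover have "rev xs ! i = xs ! Suc j" "rev xs ! Suc i = xs ! j" using i j_def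
    by (auto simp: rev_nth Suc_diff_Suc)
  ultimately show "E (rev xs ! i) (rev xs ! Suc i)" using Esym by simp
qed auto

lemma d_sym: assumes "u \<in> V" "v \<in> V" shows "d u v = d v u"
proof -
  have *: "d a b \<le> d b a" if ab: "a \<in> V" "b \<in> V" for a b
  proof -
    obtain xs where xs: "is_walk V E xs" "hd xs = b" "last xs = a" "length xs = Suc (d b a)"
      using d_ex[OF ab(2) ab(1)] by blast
    have "hd (rev xs) = a" "last (rev xs) = b" using xs by (auto simp: hd_rev last_rev)
    then show ?thesis using d_le[OF walk_rev[OF xs(1)]] xs by simp
  qed
  show ?thesis using *[OF assms] *[OF assms(2,1)] by simp
qed

lemma d_refl[simp]: "u \<in> V \<Longrightarrow> d u u = 0"
  using d_le[of "[u]" u u] by simp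

lemma d_zero: assumes "u \<in> V" "v \<in> V" "d u v = 0" shows "u = v"
proof -
  obtain xs where xs: "is_walk V E xs" "hd xs = u" "last xs = v" "length xs = Suc (d u v)"
    using d_ex assms by blast
  then show ?thesis using assms(3) by (cases xs) auto
qed

lemma d_edge: assumes "E u v" shows "d u v = 1"
proof -
  have "is_walk V E [u, v]" using assms EV by (auto simp: is_walk_def less_Suc_eq)
  then have "d u v \<le> 1" using d_le[of "[u,v]" u v] by simp
  moreover have "d u v \<noteq> 0" using d_zero assms EV by blast
  ultimately show ?thesis by simp
qed

lemma d_one: assumes "u \<in> V" "v \<in> V" "d u v = 1" shows "E u v"
proof -
  obtain xs where xs: "is_walk V E xs" "hd xs = u" "last xs = v" "length xs = Suc (d u v)"
    using d_ex assms by blast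
  then obtain a b where "xs = [a, b]" using assms(3)
    by (cases xs; cases "tl xs") auto
  then show ?thesis using xs by (auto simp: is_walk_def)
qed

lemma d_two: assumes "E u w" "E w v" shows "d u v \<le> 2"
  using d_tri[of u w v] d_edge assms EV by fastforce

lemma d_sub: assumes "is_walk V E xs" "i \<le> j" "j < length xs"
  shows "d (xs ! i) (xs ! j) \<le> j - i"
  using assms(2,3)
proof (induction j)
  case 0 then have "xs ! 0 \<in> V" using assms(1) by (auto simp: is_walk_def)
  then show ?case using 0 by simp
next
  case (Suc j)
  show ?case
  proof (cases "i = Suc j")
    case True then have "xs ! i \<in> V" using assms(1) Suc by (auto simp: is_walk_def)
    then show ?thesis using True by simp
  next
    case False
    then have ij: "i \<le> j" using Suc by simp
    have V: "xs ! i \<in> V" "xs ! j \<in> V" "xs ! Suc j \<in> V" using assms(1) Suc ij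
      by (auto simp: is_walk_def)
    have "E (xs ! j) (xs ! Suc j)" using assms(1) Suc by (simp add: is_walk_def)
    then have "d (xs ! j) (xs ! Suc j) = 1" by (rule d_edge)
    then show ?thesis using d_tri[OF V] Suc.IH ij Suc by simp
  qed
qed


lemma walk_through: "zs \<noteq> [] \<Longrightarrow> set zs \<subseteq> V \<Longrightarrow> \<exists>w. is_walk V E w \<and> hd w = hd zs \<and>
   last w = last zs \<and> set zs \<subseteq> set w \<and> length w = Suc (pcost d zs)"
proof (induction zs rule: list_nonempty_induct)
  case (single v)
  then show ?case by (intro exI[of _ "[v]"]) auto
next
  case (cons a zs)
  then obtain b r where zs: "zs = b # r" by (cases zs) auto
  from cons obtain w where w: "is_walk V E w" "hd w = b" "last w = last (b # r)" "set (b # r) \<subseteq> set w"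
    "length w = Suc (pcost d (b # r))" unfolding zs by auto
  have ab: "a \<in> V" "b \<in> V" using cons.prems zs by auto
  obtain p where p: "is_walk V E p" "hd p = a" "last p = b" "length p = Suc (d a b)"
    using d_ex[OF ab] by auto
  have wa: "is_walk V E (p @ tl w) \<and> hd (p @ tl w) = hd p \<and> last (p @ tl w) = last w
     \<and> length (p @ tl w) = length p + length w - 1" using walk_app[OF p(1) w(1)] p w by simp
  have pne: "p \<noteq> []" "w \<noteq> []" using p w by (auto simp: is_walk_def)
  have "set w = insert b (set (tl w))" using pne w(2) by (metis list.collapse list.simps(15))
  moreover have "a \<in> set p" "b \<in> set p" using pne p by auto
  ultimately have "set (a # b # r) \<subseteq> set (p @ tl w)" using w(4) by auto
  then show ?case using wa p w unfolding zs by (intro exI[of _ "p @ tl w"]) auto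
qed

lemma closed_through: assumes "zs \<noteq> []" "set zs \<subseteq> V"
  shows "\<exists>w. is_walk V E w \<and> hd w = last w \<and> set zs \<subseteq> set w \<and> length w = Suc (ccost d zs)"
proof -
  obtain w where w: "is_walk V E w" "hd w = hd zs" "last w = last zs" "set zs \<subseteq> set w"
    "length w = Suc (pcost d zs)" using walk_through assms by blast
  have "last zs \<in> V" "hd zs \<in> V" using assms by auto
  then obtain p where p: "is_walk V E p" "hd p = last zs" "last p = hd zs" "length p = Suc (d (last zs) (hd zs))"
    using d_ex by blast
  have "is_walk V E (w @ tl p) \<and> hd (w @ tl p) = hd w \<and> last (w @ tl p) = last p
     \<and> length (w @ tl p) = length w + length p - 1" using walk_app[OF w(1) p(1)] p w by simp
  then show ?thesis using w p by (intro exI[of _ "w @ tl p"]) (auto simp: ccost_def)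
qed

lemma tsp_le: assumes "zs \<noteq> []" "set zs \<subseteq> V" "S \<subseteq> set zs"
  shows "tsp V E S \<le> ccost d zs"
proof -
  obtain w where "is_walk V E w \<and> hd w = last w \<and> set zs \<subseteq> set w \<and> length w = Suc (ccost d zs)"
    using closed_through assms by blast
  then show ?thesis unfolding tsp_def using assms(3) by (intro Least_le) blast
qed

lemma tsp_ex: assumes "zs \<noteq> []" "set zs \<subseteq> V" "S \<subseteq> set zs"
  shows "\<exists>xs. is_walk V E xs \<and> hd xs = last xs \<and> S \<subseteq> set xs \<and> length xs = Suc (tsp V E S)"
proof -
  obtain w where "is_walk V E w \<and> hd w = last w \<and> set zs \<subseteq> set w \<and> length w = Suc (ccost d zs)"
    using closed_through assms by blast
  then have "\<exists>m xs. is_walk V E xs \<and> hd xs = last xs \<and> S \<subseteq> set xs \<and> length xs = Suc m"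
    using assms(3) by blast
  then show ?thesis unfolding tsp_def by (rule LeastI_ex)
qed


lemma TT_insert: assumes "finite A" "x \<notin> A" "insert x A \<subseteq> V"
  shows "TT d (insert x A) = TT d A + 2 * (\<Sum>y\<in>A. d y x)"
proof -
  have xV: "x \<in> V" using assms by auto
  have "TT d (insert x A) = (\<Sum>b\<in>insert x A. d x b) + (\<Sum>a\<in>A. d a x + (\<Sum>b\<in>A. d a b))"
    unfolding TT_def using assms by (simp add: sum.insert)
  also have "(\<Sum>b\<in>insert x A. d x b) = (\<Sum>b\<in>A. d b x)"
    using assms xV by (simp add: sum.insert) (rule sum.cong[OF refl], rule d_sym, auto)
  finally show ?thesis unfolding TT_def by (simp add: sum.distrib)
qed

lemma extend:
  assumes "finite F"
  shows "F \<inter> B = {} \<Longrightarrow> B \<union> F \<subseteq> V \<Longrightarrow> distinct ys \<Longrightarrow> set ys = B \<Longrightarrow> length ys \<ge> 2 \<Longrightarrow>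
    (length ys - 1) * ccost d ys + e \<le> TT d B \<Longrightarrow>
    \<exists>zs. distinct zs \<and> set zs = B \<union> F \<and> (card (B \<union> F) - 1) * ccost d zs + e \<le> TT d (B \<union> F)"
  using assms
proof (induction F rule: finite_induct)
  case empty
  then show ?case using distinct_card[of ys] by (intro exI[of _ ys]) auto
next
  case (insert x F)
  then obtain zs0 where z0: "distinct zs0" "set zs0 = B \<union> F"
    "(card (B \<union> F) - 1) * ccost d zs0 + e \<le> TT d (B \<union> F)" by auto
  define K where "K = card (B \<union> F)"
  have finB: "finite B" using insert by (metis List.finite_set)
  have lenK: "length zs0 = K" using z0 distinct_card K_def by metis
  have "card B \<le> K" unfolding K_def using insert finB by (intro card_mono) auto
  moreover have "card B = length ys" using insert distinct_card by metis
  ultimately have K2: "K \<ge> 2" using insert by simp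
  have xn: "x \<notin> set zs0" using z0 insert by auto
  have sy: "d x y = d y x" if "y \<in> set zs0" for y
    using that z0 insert by (intro d_sym) auto
  obtain zs where zs: "distinct zs" "set zs = insert x (set zs0)" "length zs = Suc K"
    "K * ccost d zs + ccost d zs0 \<le> K * ccost d zs0 + 2 * (\<Sum>y\<in>set zs0. d y x)"
    using insertion[where d=d, OF z0(1) lenK _ xn sy] K2 by auto
  have TT: "TT d (B \<union> insert x F) = TT d (B \<union> F) + 2 * (\<Sum>y\<in>B \<union> F. d y x)"
    using TT_insert[of "B \<union> F" x] insert finB by auto
  have cK: "card (B \<union> insert x F) = Suc K" unfolding K_def using insert finB by auto
  have "K * ccost d zs0 = (K - 1) * ccost d zs0 + ccost d zs0" using K2
    by (metis Suc_diff_1 add.commute less_le_trans mult_Suc pos2)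
  then have "K * ccost d zs + e \<le> TT d (B \<union> insert x F)"
    using zs(4)[unfolded z0(2)] z0(3) TT unfolding K_def by linarith
  then show ?case using zs cK z0(2) by (intro exI[of _ zs]) auto
qed


lemma finS: "S \<subseteq> V \<Longrightarrow> finite S" using finV finite_subset by blast

lemma upper: assumes "S \<subseteq> V" "card S = k" "k \<ge> 2"
  shows "(k - 1) * tsp V E S \<le> TT d S"
proof -
  have fin: "finite S" using finS assms by blast
  obtain a where a: "a \<in> S" using assms by fastforce
  have "card (S - {a}) \<ge> 1" using assms fin a by simp
  then have "S - {a} \<noteq> {}" by (metis card.empty not_one_le_zero)
  then obtain b where b: "b \<in> S" "b \<noteq> a" by blast
  have V: "a \<in> V" "b \<in> V" using a b assms by auto
  have base: "(length [a, b] - 1) * ccost d [a, b] + 0 \<le> TT d {a, b}"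
    using b V d_sym[of a b] by (simp add: ccost_def TT_def)
  obtain zs where zs: "distinct zs" "set zs = {a, b} \<union> (S - {a, b})"
    "(card ({a, b} \<union> (S - {a, b})) - 1) * ccost d zs + 0 \<le> TT d ({a, b} \<union> (S - {a, b}))"
    using extend[of "S - {a, b}" "{a, b}" "[a, b]" 0] base fin assms a b by auto
  have S: "{a, b} \<union> (S - {a, b}) = S" using a b by auto
  have "tsp V E S \<le> ccost d zs" using zs S assms a by (intro tsp_le) auto
  then have "(k - 1) * tsp V E S \<le> (k - 1) * ccost d zs" by (rule mult_le_mono2)
  then show ?thesis using zs(3) unfolding S assms(2) by linarith
qed

lemma strict: assumes "S \<subseteq> V" "card S = k" "{a, b, c, e} \<subseteq> S"
  "distinct [a, b, c, e]" "d a b + d c e \<noteq> d a c + d b e"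
  shows "(k - 1) * tsp V E S < TT d S"
proof -
  have fin: "finite S" using finS assms by blast
  have V: "a \<in> V" "b \<in> V" "c \<in> V" "e \<in> V" using assms by auto
  have sy: "d b a = d a b" "d c a = d a c" "d e a = d a e" "d c b = d b c" "d e b = d b e" "d e c = d c e"
    using V d_sym by metis+
  have TTB: "TT d {a, b, c, e} = 2 * (d a b + d a c + d a e + d b c + d b e + d c e)"
    using assms(4) V sy by (simp add: TT_def)
  have c1: "ccost d [a, b, c, e] = d a b + d b c + d c e + d e a" by (simp add: ccost_def)
  have c2: "ccost d [a, c, b, e] = d a c + d c b + d b e + d e a" by (simp add: ccost_def)
  have c3: "ccost d [a, b, e, c] = d a b + d b e + d e c + d c a" by (simp add: ccost_def)
  have disj: "3 * ccost d [a, b, c, e] + 1 \<le> TT d {a, b, c, e} \<or>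
      3 * ccost d [a, c, b, e] + 1 \<le> TT d {a, b, c, e} \<or>
      3 * ccost d [a, b, e, c] + 1 \<le> TT d {a, b, c, e}"
  proof (rule ccontr)
    assume "\<not> ?thesis"
    then have "TT d {a, b, c, e} \<le> 3 * ccost d [a, b, c, e]"
      "TT d {a, b, c, e} \<le> 3 * ccost d [a, c, b, e]"
      "TT d {a, b, c, e} \<le> 3 * ccost d [a, b, e, c]" by linarith+
    then show False using assms(5) arith4 unfolding c1 c2 c3 TTB sy by metis
  qed
  obtain ys where ys: "ys \<in> {[a, b, c, e], [a, c, b, e], [a, b, e, c]}"
    "3 * ccost d ys + 1 \<le> TT d {a, b, c, e}"
    using disj by (elim disjE) (rule that; simp; fail)+
  have ysp: "distinct ys" "set ys = {a, b, c, e}" "length ys = 4" using ys(1) assms(4) by auto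
  have base: "(length ys - 1) * ccost d ys + 1 \<le> TT d {a, b, c, e}" using ys ysp by simp
  obtain zs where zs: "distinct zs" "set zs = {a, b, c, e} \<union> (S - {a, b, c, e})"
    "(card ({a, b, c, e} \<union> (S - {a, b, c, e})) - 1) * ccost d zs + 1
       \<le> TT d ({a, b, c, e} \<union> (S - {a, b, c, e}))"
    using extend[of "S - {a, b, c, e}" "{a, b, c, e}" ys 1] base fin assms ysp by auto
  have S: "{a, b, c, e} \<union> (S - {a, b, c, e}) = S" using assms(3) by auto
  have "tsp V E S \<le> ccost d zs" using zs S assms by (intro tsp_le) auto
  then have "(k - 1) * tsp V E S \<le> (k - 1) * ccost d zs" by (rule mult_le_mono2)
  then show ?thesis using zs(3) unfolding S assms(2) by linarith
qed


lemma walk_nth_V: "is_walk V E xs \<Longrightarrow> i < length xs \<Longrightarrow> xs ! i \<in> V"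
  by (auto simp: is_walk_def)

lemma closed_ord: assumes "is_walk V E xs" "hd xs = last xs" "length xs = Suc m"
  "p \<le> q" "q \<le> r" "r \<le> m"
  shows "d (xs ! p) (xs ! q) + d (xs ! q) (xs ! r) + d (xs ! r) (xs ! p) \<le> m"
proof -
  have ne: "xs \<noteq> []" using assms by auto
  have m0: "xs ! m = xs ! 0" using assms ne by (simp add: last_conv_nth hd_conv_nth)
  have V: "xs ! p \<in> V" "xs ! r \<in> V" "xs ! 0 \<in> V" using assms walk_nth_V by auto
  have 1: "d (xs ! p) (xs ! q) \<le> q - p" using d_sub assms by simp
  have 2: "d (xs ! q) (xs ! r) \<le> r - q" using d_sub assms by simp
  have 3: "d (xs ! r) (xs ! 0) \<le> m - r" using d_sub[of xs r m] assms m0 by simp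
  have 4: "d (xs ! 0) (xs ! p) \<le> p - 0" using d_sub[of xs 0 p] assms by simp
  have "d (xs ! r) (xs ! p) \<le> d (xs ! r) (xs ! 0) + d (xs ! 0) (xs ! p)" using d_tri V by blast
  then show ?thesis using 1 2 3 4 assms by linarith
qed

lemma closed_pos: assumes "is_walk V E xs" "hd xs = last xs" "length xs = Suc m"
  "p \<le> m" "q \<le> m" "r \<le> m"
  shows "d (xs ! p) (xs ! q) + d (xs ! q) (xs ! r) + d (xs ! r) (xs ! p) \<le> m"
proof -
  have V: "xs ! p \<in> V" "xs ! q \<in> V" "xs ! r \<in> V" using assms walk_nth_V by auto
  have s: "d (xs ! p) (xs ! q) = d (xs ! q) (xs ! p)" "d (xs ! r) (xs ! q) = d (xs ! q) (xs ! r)"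
    "d (xs ! p) (xs ! r) = d (xs ! r) (xs ! p)" using V d_sym by auto
  consider "p \<le> q" "q \<le> r" | "p \<le> r" "r \<le> q" | "q \<le> p" "p \<le> r" | "q \<le> r" "r \<le> p"
    | "r \<le> p" "p \<le> q" | "r \<le> q" "q \<le> p" by linarith
  then show ?thesis
  proof cases
    case 1 then show ?thesis using closed_ord[OF assms(1-3), of p q r] assms by simp
  next
    case 2 then show ?thesis using closed_ord[OF assms(1-3), of p r q] assms s by simp
  next
    case 3 then show ?thesis using closed_ord[OF assms(1-3), of q p r] assms s by simp
  next
    case 4 then show ?thesis using closed_ord[OF assms(1-3), of q r p] assms s by simp
  next
    case 5 then show ?thesis using closed_ord[OF assms(1-3), of r p q] assms s by simp
  next
    case 6 then show ?thesis using closed_ord[OF assms(1-3), of r q p] assms s by simp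
  qed
qed

lemma tsp_wit: assumes "S \<subseteq> V" "S \<noteq> {}"
  shows "\<exists>xs. is_walk V E xs \<and> hd xs = last xs \<and> S \<subseteq> set xs \<and> length xs = Suc (tsp V E S)"
proof -
  have "finite S" using finS assms(1) .
  then obtain zs where zs: "set zs = S" using finite_list by blast
  then have "zs \<noteq> []" using assms(2) by auto
  then show ?thesis using tsp_ex[of zs S] assms(1) zs by simp
qed

lemma pos_of: assumes "v \<in> set xs" "length xs = Suc m" obtains p where "p \<le> m" "xs ! p = v"
proof -
  obtain i where "i < length xs" "xs ! i = v" using assms(1) by (auto simp: in_set_conv_nth)
  then show ?thesis using that[of i] assms(2) by simp
qed

lemma lower2: assumes "S \<subseteq> V" "card S = 2" shows "TT d S \<le> (2 - 1) * tsp V E S"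
proof -
  obtain a b where ab: "S = {a, b}" "a \<noteq> b" using assms card_2_iff by metis
  obtain xs where xs: "is_walk V E xs" "hd xs = last xs" "S \<subseteq> set xs" "length xs = Suc (tsp V E S)"
    using tsp_wit assms ab by blast
  obtain p q where pq: "p \<le> tsp V E S" "xs ! p = a" "q \<le> tsp V E S" "xs ! q = b"
    using pos_of xs ab by (metis insert_subset)
  have V: "a \<in> V" "b \<in> V" using assms ab by auto
  have "d a b + d b b + d b a \<le> tsp V E S" using closed_pos[OF xs(1,2,4) pq(1,3,3)] pq by simp
  then show ?thesis using ab V by (simp add: TT_def)
qed

lemma lower3: assumes "S \<subseteq> V" "card S = 3" shows "TT d S \<le> (3 - 1) * tsp V E S"
proof -
  obtain a b c where ab: "S = {a, b, c}" "a \<noteq> b" "b \<noteq> c" "a \<noteq> c" using assms card_3_iff by metis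
  obtain xs where xs: "is_walk V E xs" "hd xs = last xs" "S \<subseteq> set xs" "length xs = Suc (tsp V E S)"
    using tsp_wit assms ab by blast
  obtain p q r where pq: "p \<le> tsp V E S" "xs ! p = a" "q \<le> tsp V E S" "xs ! q = b"
     "r \<le> tsp V E S" "xs ! r = c"
    using pos_of xs ab by (metis insert_subset)
  have V: "a \<in> V" "b \<in> V" "c \<in> V" using assms ab by auto
  have s: "d b a = d a b" "d c b = d b c" "d c a = d a c" using V d_sym by auto
  have "d a b + d b c + d c a \<le> tsp V E S" using closed_pos[OF xs(1,2,4) pq(1,3,5)] pq by simp
  then show ?thesis using ab V s by (simp add: TT_def)
qed

lemma closed_set: assumes "is_walk V E xs" "hd xs = last xs" "length xs = Suc m" "m \<ge> 1"
  shows "set xs \<subseteq> (!) xs ` {..<m}"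
proof
  fix v assume "v \<in> set xs"
  then obtain p where p: "p \<le> m" "xs ! p = v" using pos_of assms by metis
  have ne: "xs \<noteq> []" using assms by auto
  have m0: "xs ! m = xs ! 0" using assms ne by (simp add: last_conv_nth hd_conv_nth)
  show "v \<in> (!) xs ` {..<m}"
  proof (cases "p = m")
    case True then show ?thesis using p m0 assms(4) by (intro image_eqI[of _ _ 0]) auto
  next
    case False then show ?thesis using p by auto
  qed
qed

lemma closed_card: assumes "is_walk V E xs" "hd xs = last xs" "length xs = Suc m"
  "S \<subseteq> set xs" "card S \<ge> 2"
  shows "m \<ge> 1 \<and> card S \<le> m"
proof -
  have m1: "m \<ge> 1"
  proof (rule ccontr)
    assume "\<not> m \<ge> 1"
    then have "m = 0" by simp
    then obtain v where "xs = [v]" using assms(3) by (cases xs) auto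
    then have "card S \<le> card {v}" using assms(4) by (intro card_mono) auto
    then show False using assms(5) by simp
  qed
  have "card S \<le> card ((!) xs ` {..<m})"
    using closed_set[OF assms(1-3) m1] assms(4) by (intro card_mono) auto
  also have "\<dots> \<le> m" using card_image_le[of "{..<m}" "(!) xs"] by simp
  finally show ?thesis using m1 by simp
qed

lemma lower_complete: assumes "is_complete V E" "S \<subseteq> V" "card S = k" "k \<ge> 2"
  shows "TT d S \<le> (k - 1) * tsp V E S"
proof -
  have fin: "finite S" using finS assms by blast
  have ne: "S \<noteq> {}" using assms by auto
  obtain xs where xs: "is_walk V E xs" "hd xs = last xs" "S \<subseteq> set xs" "length xs = Suc (tsp V E S)"
    using tsp_wit assms ne by blast
  have km: "k \<le> tsp V E S" using closed_card[OF xs(1,2,4,3)] assms by simp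
  have row: "(\<Sum>b\<in>S. d a b) \<le> k - 1" if a: "a \<in> S" for a
  proof -
    have "(\<Sum>b\<in>S. d a b) = d a a + (\<Sum>b\<in>S - {a}. d a b)" using fin a sum.remove by metis
    also have "\<dots> = (\<Sum>b\<in>S - {a}. d a b)" using a assms by auto
    also have "\<dots> \<le> (\<Sum>b\<in>S - {a}. 1)"
    proof (rule sum_mono)
      fix b assume "b \<in> S - {a}"
      then have "E a b" using assms a unfolding is_complete_def by auto
      then show "d a b \<le> 1" using d_edge by simp
    qed
    finally show ?thesis using assms fin a by simp
  qed
  have "TT d S \<le> (\<Sum>a\<in>S. k - 1)" unfolding TT_def using row by (intro sum_mono) auto
  also have "\<dots> = card S * (k - 1)" by simp
  also have "\<dots> \<le> (k - 1) * tsp V E S" using km assms by (simp add: mult.commute)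
  finally show ?thesis .
qed


lemma mod_suc_cases: "i < m \<Longrightarrow> Suc i mod m = (if Suc i = m then 0 else Suc i)"
  by auto

lemma lower_star: assumes "is_star V E" "S \<subseteq> V" "card S = k" "k \<ge> 2"
  shows "TT d S \<le> (k - 1) * tsp V E S"
proof -
  obtain c where cV: "c \<in> V" and st: "\<And>u v. u \<in> V \<Longrightarrow> v \<in> V \<Longrightarrow> E u v \<longleftrightarrow> (u \<noteq> v \<and> (u = c \<or> v = c))"
    using assms(1) unfolding is_star_def by blast
  have fin: "finite S" using finS assms by blast
  have ne: "S \<noteq> {}" using assms by auto
  define h where "h b = (if b = c then 0 else (1::nat))" for b
  define H where "H = (\<Sum>b\<in>S. h b)"
  have dh: "d a b \<le> h a + h b" if "a \<in> V" "b \<in> V" "a \<noteq> b" for a b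
  proof (cases "a = c \<or> b = c")
    case True
    then have "E a b" using st that by auto
    then show ?thesis using d_edge True that by (auto simp: h_def)
  next
    case False
    then have "E a c" "E c b" using st that cV by auto
    then have "d a b \<le> 2" using d_two by blast
    then show ?thesis using False by (simp add: h_def)
  qed
  have row: "(\<Sum>b\<in>S. d a b) + h a \<le> (k - 1) * h a + H" if a: "a \<in> S" for a
  proof -
    have "(\<Sum>b\<in>S. d a b) = d a a + (\<Sum>b\<in>S - {a}. d a b)" using fin a sum.remove by metis
    also have "\<dots> = (\<Sum>b\<in>S - {a}. d a b)" using a assms by auto
    also have "\<dots> \<le> (\<Sum>b\<in>S - {a}. h a + h b)"
      using dh a assms by (intro sum_mono) auto
    also have "\<dots> = card (S - {a}) * h a + (\<Sum>b\<in>S - {a}. h b)" by (simp add: sum.distrib)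
    finally have 1: "(\<Sum>b\<in>S. d a b) \<le> card (S - {a}) * h a + (\<Sum>b\<in>S - {a}. h b)" .
    have 2: "H = h a + (\<Sum>b\<in>S - {a}. h b)" unfolding H_def using fin a sum.remove by metis
    have 3: "card (S - {a}) = k - 1" using fin a assms by simp
    show ?thesis using 1 2 unfolding 3 by linarith
  qed
  have "(\<Sum>a\<in>S. (\<Sum>b\<in>S. d a b) + h a) \<le> (\<Sum>a\<in>S. (k - 1) * h a + H)"
    using row by (intro sum_mono) auto
  then have TTH: "TT d S + H \<le> (k - 1) * H + k * H"
    unfolding TT_def H_def using assms(3) by (simp add: sum.distrib sum_distrib_left)
  have Hc: "H \<le> card (S - {c})"
  proof (cases "c \<in> S")
    case True
    have "H = h c + (\<Sum>b\<in>S - {c}. h b)" unfolding H_def using fin True sum.remove by metis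
    also have "\<dots> = (\<Sum>b\<in>S - {c}. 1)" by (simp add: h_def)
    finally show ?thesis by simp
  next
    case False
    have "H = (\<Sum>b\<in>S. 1)" unfolding H_def using False by (intro sum.cong) (auto simp: h_def)
    then show ?thesis using False by simp
  qed
  obtain xs where xs: "is_walk V E xs" "hd xs = last xs" "S \<subseteq> set xs" "length xs = Suc (tsp V E S)"
    using tsp_wit assms ne by blast
  define m where "m = tsp V E S"
  have m1: "m \<ge> 1" using closed_card[OF xs(1,2,4,3)] assms m_def by simp
  have xsne: "xs \<noteq> []" using xs by auto
  have m0: "xs ! m = xs ! 0" using xs xsne m_def by (simp add: last_conv_nth hd_conv_nth)
  define L where "L = {i. i < m \<and> xs ! i \<noteq> c}"
  have finL: "finite L" unfolding L_def by simp
  have LS: "S - {c} \<subseteq> (!) xs ` L"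
  proof
    fix v assume v: "v \<in> S - {c}"
    then have "v \<in> (!) xs ` {..<m}" using closed_set[OF xs(1,2) _ m1] xs(3,4) m_def by auto
    then obtain i where "i < m" "xs ! i = v" by auto
    then show "v \<in> (!) xs ` L" using v unfolding L_def by auto
  qed
  have cL: "card (S - {c}) \<le> card L"
    using card_mono[OF finite_imageI[OF finL] LS] card_image_le[OF finL, of "(!) xs"] by linarith
  define f where "f i = Suc i mod m" for i
  have fc: "xs ! f i = c" if "i \<in> L" for i
  proof -
    have i: "i < m" "xs ! i \<noteq> c" using that L_def by auto
    have "E (xs ! i) (xs ! Suc i)" using xs(1) xs(4) i m_def by (simp add: is_walk_def)
    moreover have "xs ! i \<in> V" "xs ! Suc i \<in> V" using xs i m_def walk_nth_V by auto
    ultimately have "xs ! Suc i = c" using st i by blast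
    then show ?thesis using i m0 unfolding f_def by (auto simp: mod_suc_cases)
  qed
  have fL: "f ` L \<subseteq> {..<m} - L"
  proof
    fix j assume "j \<in> f ` L"
    then obtain i where i: "i \<in> L" "j = f i" by auto
    have "j < m" using i m1 unfolding f_def by simp
    moreover have "xs ! j = c" using fc i by simp
    ultimately show "j \<in> {..<m} - L" unfolding L_def by auto
  qed
  have injf: "inj_on f L"
  proof
    fix i j assume ij: "i \<in> L" "j \<in> L" "f i = f j"
    then have "i < m" "j < m" unfolding L_def by auto
    then show "i = j" using ij(3) unfolding f_def by (auto simp: mod_suc_cases split: if_splits)
  qed
  have "card L \<le> card ({..<m} - L)"
    using card_inj_on_le[OF injf fL] by simp
  also have "\<dots> = m - card L" using finL by (subst card_Diff_subset) (auto simp: L_def)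
  finally have "2 * card L \<le> m" by simp
  then have H2: "2 * H \<le> m" using Hc cL by linarith
  have kH: "k * H = (k - 1) * H + H" using assms(4)
    by (metis Suc_diff_1 add.commute less_le_trans mult_Suc pos2)
  have "(k - 1) * (2 * H) \<le> (k - 1) * m" using H2 by (rule mult_le_mono2)
  moreover have "(k - 1) * (2 * H) = (k - 1) * H + (k - 1) * H" by simp
  ultimately show ?thesis using TTH kH unfolding m_def by linarith
qed

lemma exit: assumes "A \<subseteq> V" "a \<in> A" "b \<in> V" "b \<notin> A"
  shows "\<exists>y\<in>A. \<exists>x\<in>V. x \<notin> A \<and> E y x"
proof -
  obtain xs where xs: "is_walk V E xs" "hd xs = a" "last xs = b"
    using cg assms unfolding connected_graph_def by blast
  have ne: "xs \<noteq> []" using xs by (auto simp: is_walk_def)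
  have ex: "\<exists>i. i < length xs \<and> xs ! i \<notin> A"
    using ne xs assms by (intro exI[of _ "length xs - 1"]) (auto simp: last_conv_nth)
  define i where "i = (LEAST i. i < length xs \<and> xs ! i \<notin> A)"
  have i: "i < length xs" "xs ! i \<notin> A" using LeastI_ex[OF ex] unfolding i_def by auto
  have "xs ! 0 \<in> A" using xs(2) ne assms(2) by (simp add: hd_conv_nth)
  have i0: "i \<noteq> 0"
  proof
    assume "i = 0"
    with i(2) \<open>xs ! 0 \<in> A\<close> show False by simp
  qed
  have "i - 1 < i" using i0 by simp
  then have "\<not> (i - 1 < length xs \<and> xs ! (i - 1) \<notin> A)" unfolding i_def by (rule not_less_Least)
  then have "xs ! (i - 1) \<in> A" using i by auto
  moreover have "Suc (i - 1) < length xs" using i i0 by simp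
  then have "E (xs ! (i - 1)) (xs ! Suc (i - 1))" using xs(1) unfolding is_walk_def by blast
  moreover have "xs ! i \<in> V" using xs(1) i walk_nth_V by auto
  ultimately show ?thesis using i i0 by (metis Suc_pred' not_gr_zero)
qed

lemma d_ge2: "u \<in> V \<Longrightarrow> v \<in> V \<Longrightarrow> u \<noteq> v \<Longrightarrow> \<not> E u v \<Longrightarrow> d u v \<ge> 2"
  using d_zero d_one by (metis One_nat_def less_2_cases not_less)

lemma fourpt:
  assumes "\<not> is_star V E" "\<not> is_complete V E"
  shows "\<exists>a b c e. {a, b, c, e} \<subseteq> V \<and> distinct [a, b, c, e] \<and> d a b + d c e \<noteq> d a c + d b e"
proof (rule ccontr)
  assume "\<not> ?thesis"
  then have H4: "\<And>a b c e. a \<in> V \<Longrightarrow> b \<in> V \<Longrightarrow> c \<in> V \<Longrightarrow> e \<in> V \<Longrightarrow> distinct [a, b, c, e] \<Longrightarrow>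
     d a b + d c e = d a c + d b e" by auto
  obtain p q where pq: "p \<in> V" "q \<in> V" "p \<noteq> q" "\<not> E p q"
    using assms(2) EV unfolding is_complete_def by blast
  define A where "A = {v \<in> V. v = p \<or> E p v}"
  have "q \<notin> A" using pq unfolding A_def by auto
  then obtain y x where yx: "y \<in> A" "x \<in> V" "x \<notin> A" "E y x"
    using exit[of A p q] pq unfolding A_def by auto
  have "y \<noteq> p" using yx unfolding A_def using EV by auto
  then have "E p y" using yx unfolding A_def by auto
  define u where "u = p"
  define c where "c = y"
  define w where "w = x"
  have ch: "E u c" "E w c" "u \<noteq> w" "\<not> E u w" "u \<in> V" "w \<in> V" "c \<in> V"
    using yx \<open>E p y\<close> pq Esym EV unfolding u_def c_def w_def A_def by auto
  have ucw: "u \<noteq> c" "w \<noteq> c" using EV ch by auto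
  have duw: "d u w = 2" using d_ge2[of u w] d_two[of u c w] ch Esym by fastforce
  have adj: "E x c" if xV: "x \<in> V" "x \<noteq> c" for x
  proof (rule ccontr)
    assume nx: "\<not> E x c"
    define B where "B = {v \<in> V. v = c \<or> E c v}"
    have "x \<notin> B" using nx xV Esym unfolding B_def by auto
    then obtain y' x' where yx': "y' \<in> B" "x' \<in> V" "x' \<notin> B" "E y' x'"
      using exit[of B c x] xV ch unfolding B_def by auto
    have "y' \<noteq> c" using yx' unfolding B_def using EV by auto
    then have cy: "E c y'" using yx' unfolding B_def by auto
    have x'c: "x' \<noteq> c" "\<not> E c x'" using yx' unfolding B_def by auto
    have dcx: "d x' c = 2" using d_ge2[of x' c] d_two[of x' y' c] x'c yx' cy Esym ch by fastforce
    have uB: "u \<in> B" "w \<in> B" using ch Esym unfolding B_def by auto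
    have dis1: "distinct [u, w, x', c]" using uB yx' ch ucw x'c by auto
    have "d u w + d x' c = d u x' + d w c" using H4[OF ch(5,6) yx'(2) ch(7) dis1] .
    then have dux: "d u x' = 3" using duw dcx d_edge[OF ch(2)] by simp
    have yu: "y' \<noteq> u" using dux d_edge yx'(4) by auto
    have yV: "y' \<in> V" using EV cy by auto
    have dis2: "distinct [u, x', c, y']" using yu uB yx' \<open>y' \<noteq> c\<close> EV ch x'c ucw by auto
    have "d u x' + d c y' = d u c + d x' y'" using H4[OF ch(5) yx'(2) ch(7) yV dis2] .
    moreover have "d c y' = 1" "d u c = 1" "d x' y'= 1" using d_edge cy ch yx' Esym by auto
    ultimately show False using dux by simp
  qed
  have cherry: "\<not> E x a" if "a \<in> V" "b \<in> V" "E a c" "E b c" "a \<noteq> b" "\<not> E a b"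
    "x \<in> V" "x \<notin> {a, b, c}" for a b x
  proof -
    have dab: "d b a = 2" using d_ge2[of b a] d_two[of b c a] that Esym by fastforce
    have dcx: "d c x = 1" using adj[of x] that d_edge Esym by auto
    have dis: "distinct [b, a, c, x]" using that EV[OF that(3)] EV[OF that(4)] by auto
    have "d b a + d c x = d b c + d a x" using H4[OF that(2,1) ch(7) that(7) dis] .
    then have "d a x = 2" using dab dcx d_edge[OF that(4)] by simp
    then have "\<not> E a x" using d_edge by auto
    then show ?thesis using Esym by auto
  qed
  have noe: "False" if "x \<in> V" "y \<in> V" "x \<noteq> c" "y \<noteq> c" "x \<noteq> y" "E x y" "x \<notin> {u, w}" for x y
  proof -
    have "\<not> E x u" using cherry[of u w x] ch that by auto
    then have nux: "\<not> E x u" "x \<noteq> u" using that by auto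
    have xc: "E x c" using adj that by auto
    show False
    proof (cases "y = u")
      case True then show ?thesis using nux that by auto
    next
      case False
      then have "\<not> E y x" using cherry[of x u y] xc ch nux that Esym by auto
      then show ?thesis using that Esym by auto
    qed
  qed
  have "is_star V E"
    unfolding is_star_def
  proof (intro bexI[of _ c] ballI)
    fix p' q' assume pq': "p' \<in> V" "q' \<in> V"
    show "E p' q' \<longleftrightarrow> (p' \<noteq> q' \<and> (p' = c \<or> q' = c))"
    proof
      assume e: "E p' q'"
      have "p' \<noteq> q'" using e EV by auto
      moreover have "p' = c \<or> q' = c"
      proof (rule ccontr)
        assume nc: "\<not> (p' = c \<or> q' = c)"
        have "p' \<in> {u, w}" using noe[of p' q'] nc pq' e EV by auto
        moreover have "q' \<in> {u, w}" using noe[of q' p'] nc pq' e EV Esym by auto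
        ultimately show False using e ch EV Esym by auto
      qed
      ultimately show "p' \<noteq> q' \<and> (p' = c \<or> q' = c)" by simp
    next
      assume "p' \<noteq> q' \<and> (p' = c \<or> q' = c)"
      then show "E p' q'" using adj pq' Esym by auto
    qed
  qed (rule ch(7))
  then show False using assms(1) by simp
qed


lemma count_pairs: assumes "a \<in> V" "b \<in> V" "a \<noteq> b" "k \<ge> 2"
  shows "card {S. S \<subseteq> V \<and> card S = k \<and> a \<in> S \<and> b \<in> S} = (card V - 2) choose (k - 2)"
proof -
  define X where "X = {S. S \<subseteq> V \<and> card S = k \<and> a \<in> S \<and> b \<in> S}"
  define Y where "Y = {T. T \<subseteq> V - {a, b} \<and> card T = k - 2}"
  define f where "f S = S - {a, b}" for S :: "'a set"
  have inj: "inj_on f X"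
  proof
    fix S1 S2 assume "S1 \<in> X" "S2 \<in> X" "f S1 = f S2"
    then show "S1 = S2" unfolding X_def f_def by blast
  qed
  have img: "f ` X = Y"
  proof
    show "f ` X \<subseteq> Y"
    proof
      fix T assume "T \<in> f ` X"
      then obtain S where S: "S \<in> X" "T = f S" by auto
      have "finite S" using S finS unfolding X_def by auto
      have sub: "{a, b} \<subseteq> S" using S unfolding X_def by auto
      have "card (S - {a, b}) = card S - card {a, b}" using sub by (intro card_Diff_subset) auto
      then have "card T = k - 2" using S assms unfolding X_def f_def by auto
      then show "T \<in> Y" using S unfolding Y_def X_def f_def by auto
    qed
  next
    show "Y \<subseteq> f ` X"
    proof
      fix T assume T: "T \<in> Y"
      have finT: "finite T" using T finV finite_subset unfolding Y_def by blast
      have "card (T \<union> {a, b}) = card T + card {a, b}" using T finT unfolding Y_def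
        by (intro card_Un_disjoint) auto
      then have "card (T \<union> {a, b}) = k" using T assms unfolding Y_def by auto
      then have "T \<union> {a, b} \<in> X" using T assms unfolding X_def Y_def by auto
      moreover have "T = f (T \<union> {a, b})" using T unfolding f_def Y_def by auto
      ultimately show "T \<in> f ` X" by blast
    qed
  qed
  have "card X = card Y" using card_image[OF inj] img by simp
  also have "card Y = card (V - {a, b}) choose (k - 2)" unfolding Y_def
    using n_subsets finV by blast
  also have "card (V - {a, b}) = card V - 2" using assms finV by (subst card_Diff_subset) auto
  finally show ?thesis unfolding X_def .
qed

lemma sum_restrict: "S \<subseteq> A \<Longrightarrow> finite A \<Longrightarrow> (\<Sum>a\<in>A. if a \<in> S then g a else 0) = (\<Sum>a\<in>S. (g a :: nat))"
  by (simp add: sum.If_cases Int_absorb1 Int_def[symmetric])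

lemma sum_TT: assumes "k \<ge> 2"
  shows "(\<Sum>S\<in>{S. S \<subseteq> V \<and> card S = k}. TT d S) = ((card V - 2) choose (k - 2)) * (\<Sum>u\<in>V. \<Sum>v\<in>V. d u v)"
proof -
  define Sk where "Sk = {S. S \<subseteq> V \<and> card S = k}"
  have finSk: "finite Sk" unfolding Sk_def using finV by simp
  have "(\<Sum>S\<in>Sk. TT d S) = (\<Sum>S\<in>Sk. \<Sum>a\<in>V. \<Sum>b\<in>V. if a \<in> S \<and> b \<in> S then d a b else 0)"
  proof (rule sum.cong[OF refl])
    fix S assume "S \<in> Sk"
    then have SV: "S \<subseteq> V" unfolding Sk_def by auto
    have "(\<Sum>a\<in>V. \<Sum>b\<in>V. if a \<in> S \<and> b \<in> S then d a b else 0)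
        = (\<Sum>a\<in>V. if a \<in> S then (\<Sum>b\<in>V. if b \<in> S then d a b else 0) else 0)"
      by (intro sum.cong) auto
    also have "\<dots> = (\<Sum>a\<in>S. \<Sum>b\<in>V. if b \<in> S then d a b else 0)"
      using sum_restrict[OF SV finV] .
    also have "\<dots> = (\<Sum>a\<in>S. \<Sum>b\<in>S. d a b)"
      using sum_restrict[OF SV finV] by simp
    finally show "TT d S = (\<Sum>a\<in>V. \<Sum>b\<in>V. if a \<in> S \<and> b \<in> S then d a b else 0)"
      unfolding TT_def by simp
  qed
  also have "\<dots> = (\<Sum>a\<in>V. \<Sum>b\<in>V. \<Sum>S\<in>Sk. if a \<in> S \<and> b \<in> S then d a b else 0)"
    by (subst sum.swap) (subst sum.swap, rule refl)
  also have "\<dots> = (\<Sum>a\<in>V. \<Sum>b\<in>V. ((card V - 2) choose (k - 2)) * d a b)"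
  proof (intro sum.cong[OF refl])
    fix a b assume ab: "a \<in> V" "b \<in> V"
    have "(\<Sum>S\<in>Sk. if a \<in> S \<and> b \<in> S then d a b else 0) = card (Sk \<inter> {S. a \<in> S \<and> b \<in> S}) * d a b"
      using finSk by (simp add: sum.If_cases)
    also have "Sk \<inter> {S. a \<in> S \<and> b \<in> S} = {S. S \<subseteq> V \<and> card S = k \<and> a \<in> S \<and> b \<in> S}"
      unfolding Sk_def by auto
    finally show "(\<Sum>S\<in>Sk. if a \<in> S \<and> b \<in> S then d a b else 0) = ((card V - 2) choose (k - 2)) * d a b"
      using count_pairs[OF ab _ assms] ab by (cases "a = b") auto
  qed
  finally show ?thesis unfolding Sk_def by (simp add: sum_distrib_left)
qed

end

lemma binom_id: assumes "2 \<le> k" "k \<le> n"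
  shows "k * (k - 1) * (n choose k) = n * (n - 1) * ((n - 2) choose (k - 2))"
    and "2 * (n choose 2) = n * (n - 1)"
proof -
  define n' where "n' = n - 2"
  define k' where "k' = k - 2"
  have n: "n = Suc (Suc n')" using assms unfolding n'_def by arith
  have k: "k = Suc (Suc k')" using assms unfolding k'_def by arith
  have 1: "Suc (Suc k') * (Suc (Suc n') choose Suc (Suc k')) = Suc (Suc n') * (Suc n' choose Suc k')"
    by (rule Suc_times_binomial)
  have 2: "Suc k' * (Suc n' choose Suc k') = Suc n' * (n' choose k')"
    by (rule Suc_times_binomial)
  have "Suc (Suc k') * Suc k' * (Suc (Suc n') choose Suc (Suc k')) = Suc k' * (Suc (Suc n') * (Suc n' choose Suc k'))"
    using 1 by (metis mult.assoc mult.commute)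
  also have "\<dots> = Suc (Suc n') * (Suc k' * (Suc n' choose Suc k'))" by (simp only: mult.left_commute)
  also have "\<dots> = Suc (Suc n') * (Suc n' * (n' choose k'))" by (simp only: 2)
  finally have F: "Suc (Suc k') * Suc k' * (Suc (Suc n') choose Suc (Suc k')) = Suc (Suc n') * (Suc n' * (n' choose k'))" .
  have e: "n - 2 = n'" "k - 2 = k'" "n - 1 = Suc n'" "k - 1 = Suc k'" using n k by simp_all
  show "k * (k - 1) * (n choose k) = n * (n - 1) * ((n - 2) choose (k - 2))"
    unfolding e using F unfolding n[symmetric] k[symmetric] by (simp only: mult.assoc)
  have 3: "Suc 1 * (Suc (Suc n') choose Suc 1) = Suc (Suc n') * (Suc n' choose 1)"
    by (rule Suc_times_binomial)
  show "2 * (n choose 2) = n * (n - 1)" using 3 unfolding n by (simp add: numeral_2_eq_2)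
qed


lemma sum_eq_iff_all: assumes "finite A" "\<And>x. x \<in> A \<Longrightarrow> f x \<le> (g x :: nat)"
  shows "sum f A = sum g A \<longleftrightarrow> (\<forall>x\<in>A. f x = g x)"
proof
  assume eq: "sum f A = sum g A"
  show "\<forall>x\<in>A. f x = g x"
  proof (rule ccontr)
    assume "\<not> ?thesis"
    then obtain a where "a \<in> A" "f a < g a" using assms(2) le_neq_implies_less by blast
    then have "sum f A < sum g A" using assms by (intro sum_strict_mono_ex1) auto
    then show False using eq by simp
  qed
qed (rule sum.cong, auto)

theorem theorem3:
  fixes V :: "'a set" and E :: "'a \<Rightarrow> 'a \<Rightarrow> bool" and k :: nat
  assumes "simple_graph V E" and "connected_graph V E"
    and "k \<ge> 2" and "card V \<ge> k"
  shows "real (wiener_tsp V E k) \<le> real k * real (card V choose k) * avg_dist V E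
    \<and> real k * real (card V choose k) * avg_dist V E
        = 2 / (real k - 1) * real (card V - 2 choose (k - 2)) * wiener V E
    \<and> (real (wiener_tsp V E k) = real k * real (card V choose k) * avg_dist V E
        \<longleftrightarrow> (k \<in> {2, 3} \<or> (k > 3 \<and> (is_star V E \<or> is_complete V E))))"
proof -
  interpret G V E using assms(1,2) by unfold_locales
  define n where "n = card V"
  define Sk where "Sk = {S. S \<subseteq> V \<and> card S = k}"
  define D where "D = (\<Sum>u\<in>V. \<Sum>v\<in>V. d u v)"
  define C where "C = (n - 2) choose (k - 2)"
  define w where "w = wiener_tsp V E k"
  have finSk: "finite Sk" unfolding Sk_def using finV by simp
  have n2: "n \<ge> 2" "k \<le> n" using assms unfolding n_def by auto
  have wien: "wiener V E = real D / 2" unfolding wiener_def D_def by simp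
  have w_def': "w = (\<Sum>S\<in>Sk. tsp V E S)" unfolding w_def wiener_tsp_def Sk_def ..
  have b1: "k * (k - 1) * (n choose k) = n * (n - 1) * C" using binom_id(1)[OF assms(3) n2(2)] unfolding C_def .
  have b2: "2 * (n choose 2) = n * (n - 1)" using binom_id(2)[OF assms(3) n2(2)] .
  have rb1: "real k * (real k - 1) * real (n choose k) = real n * (real n - 1) * real C"
    using arg_cong[OF b1, of real] n2 assms(3) by (simp add: of_nat_diff)
  have rb2: "2 * real (n choose 2) = real n * (real n - 1)"
    using arg_cong[OF b2, of real] n2 by (simp add: of_nat_diff)
  have k1: "real k - 1 > 0" using assms(3) by simp
  have nn: "real n * (real n - 1) > 0" using n2 by simp
  have id2: "real k * real (n choose k) * avg_dist V E = 2 / (real k - 1) * real C * wiener V E"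
  proof -
    have c2: "real (n choose 2) = real n * (real n - 1) / 2" using rb2 by simp
    have "real k * real (n choose k) * avg_dist V E = (real k * real (n choose k) * wiener V E * 2) / (real n * (real n - 1))"
      unfolding avg_dist_def n_def[symmetric] c2 by simp
    also have "\<dots> = (2 * real C * wiener V E) / (real k - 1)"
    proof (subst frac_eq_eq)
      show "real n * (real n - 1) \<noteq> 0" "real k - 1 \<noteq> 0" using nn k1 by linarith+
      have "real k * real (n choose k) * wiener V E * 2 * (real k - 1)
          = 2 * wiener V E * (real k * (real k - 1) * real (n choose k))" by (simp add: algebra_simps)
      also have "\<dots> = 2 * wiener V E * (real n * (real n - 1) * real C)" by (simp only: rb1)
      also have "\<dots> = 2 * real C * wiener V E * (real n * (real n - 1))" by (simp add: algebra_simps)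
      finally show "real k * real (n choose k) * wiener V E * 2 * (real k - 1) = 2 * real C * wiener V E * (real n * (real n - 1))" .
    qed
    also have "\<dots> = 2 / (real k - 1) * real C * wiener V E" by simp
    finally show ?thesis .
  qed
  have up: "(k - 1) * tsp V E S \<le> TT d S" if "S \<in> Sk" for S
    using upper[of S k] that assms unfolding Sk_def by auto
  have sTT: "(\<Sum>S\<in>Sk. TT d S) = C * D" using sum_TT[OF assms(3)] unfolding Sk_def C_def D_def n_def .
  have kw: "(k - 1) * w = (\<Sum>S\<in>Sk. (k - 1) * tsp V E S)" unfolding w_def' by (simp add: sum_distrib_left)
  have le: "(k - 1) * w \<le> C * D" unfolding kw sTT[symmetric] using up by (intro sum_mono) auto
  have RHS: "2 / (real k - 1) * real C * wiener V E = real (C * D) / (real k - 1)"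
    unfolding wien using k1 by (simp add: field_simps)
  have rk: "real (k - 1) = real k - 1" using assms(3) by (simp add: of_nat_diff)
  have c1: "real w \<le> real k * real (n choose k) * avg_dist V E"
  proof -
    have "(real k - 1) * real w \<le> real (C * D)" using le rk by (metis of_nat_le_iff of_nat_mult)
    then have "real w \<le> real (C * D) / (real k - 1)" using k1 by (simp add: field_simps)
    then show ?thesis by (simp only: id2 RHS)
  qed
  have eqiff: "real w = real k * real (n choose k) * avg_dist V E \<longleftrightarrow> (\<forall>S\<in>Sk. (k - 1) * tsp V E S = TT d S)"
  proof -
    have "real w = real k * real (n choose k) * avg_dist V E \<longleftrightarrow> real w = real (C * D) / (real k - 1)"
      by (simp only: id2 RHS)
    also have "\<dots> \<longleftrightarrow> (real k - 1) * real w = real (C * D)" using k1 by (auto simp: field_simps)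
    also have "\<dots> \<longleftrightarrow> (k - 1) * w = C * D" using rk by (metis of_nat_eq_iff of_nat_mult)
    also have "\<dots> \<longleftrightarrow> (\<Sum>S\<in>Sk. (k - 1) * tsp V E S) = (\<Sum>S\<in>Sk. TT d S)" unfolding kw sTT ..
    also have "\<dots> \<longleftrightarrow> (\<forall>S\<in>Sk. (k - 1) * tsp V E S = TT d S)" by (rule sum_eq_iff_all[OF finSk up])
    finally show ?thesis .
  qed
  have c3: "(\<forall>S\<in>Sk. (k - 1) * tsp V E S = TT d S) \<longleftrightarrow> (k \<in> {2, 3} \<or> (k > 3 \<and> (is_star V E \<or> is_complete V E)))"
  proof
    assume all: "\<forall>S\<in>Sk. (k - 1) * tsp V E S = TT d S"
    show "k \<in> {2, 3} \<or> (k > 3 \<and> (is_star V E \<or> is_complete V E))"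
    proof (rule ccontr)
      assume neg: "\<not> ?thesis"
      then have k4: "k \<ge> 4" using assms(3) by auto
      have ns: "\<not> is_star V E" "\<not> is_complete V E" using neg k4 by auto
      obtain a b c e where abce: "{a, b, c, e} \<subseteq> V" "distinct [a, b, c, e]" "d a b + d c e \<noteq> d a c + d b e"
        using fourpt[OF ns] by blast
      have "card (V - {a, b, c, e}) = n - 4"
        using abce finV unfolding n_def by (subst card_Diff_subset) auto
      then have "k - 4 \<le> card (V - {a, b, c, e})" using n2 by simp
      then obtain T where T: "T \<subseteq> V - {a, b, c, e}" "card T = k - 4" "finite T"
        by (rule obtain_subset_with_card_n)
      define S where "S = T \<union> {a, b, c, e}"
      have "card S = card T + card {a, b, c, e}" unfolding S_def using T
        by (intro card_Un_disjoint) auto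
      then have cS: "card S = k" using T abce k4 by simp
      have SV: "S \<subseteq> V" using T abce unfolding S_def by auto
      have "(k - 1) * tsp V E S < TT d S" using strict[OF SV cS _ abce(2,3)] unfolding S_def by auto
      moreover have "S \<in> Sk" using SV cS unfolding Sk_def by auto
      ultimately show False using all by auto
    qed
  next
    assume cond: "k \<in> {2, 3} \<or> (k > 3 \<and> (is_star V E \<or> is_complete V E))"
    show "\<forall>S\<in>Sk. (k - 1) * tsp V E S = TT d S"
    proof
      fix S assume S: "S \<in> Sk"
      then have SV: "S \<subseteq> V" and cS: "card S = k" unfolding Sk_def by auto
      have "TT d S \<le> (k - 1) * tsp V E S"
      proof -
        consider "k = 2" | "k = 3" | "is_star V E" | "is_complete V E" using cond by blast
        then show ?thesis
        proof cases
          case 1 then show ?thesis using lower2[OF SV] cS by simp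
        next
          case 2 then show ?thesis using lower3[OF SV] cS by simp
        next
          case 3 from lower_star[OF 3 SV cS assms(3)] show ?thesis .
        next
          case 4 from lower_complete[OF 4 SV cS assms(3)] show ?thesis .
        qed
      qed
      then show "(k - 1) * tsp V E S = TT d S" using up[OF S] by simp
    qed
  qed
  have c4: "real w = real k * real (n choose k) * avg_dist V E \<longleftrightarrow> (k \<in> {2, 3} \<or> (k > 3 \<and> (is_star V E \<or> is_complete V E)))"
    using eqiff c3 by (rule trans)
  show ?thesis using c1 id2 c4 unfolding w_def n_def C_def by (intro conjI)
qed

end
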